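(* Let $A\subset B$ be prime Goldie $\mathsf{k}$-algebras with $LD\,A=LD\,B$. If $B$ is $LD$-stable, then so is $A$.
   Context: $\mathsf{k}$ is a field of characteristic zero. $GK$ is Gelfand–Kirillov dimension: $GK\,R=\sup_V\limsup_m\log(\dim V^m)/\log m$ over subframes $V$ (finite-dimensional subspaces containing $1$). Lower transcendence degree $LD$: if every subframe $V$ admits a finite-dimensional nonzero $W$ with $\dim VW=\dim W$, then $LD\,R=0$; otherwise $LD\,R=\sup_V\sup\{d>0:\exists c>0,\ \dim VW\ge\dim W+c(\dim W)^{(d-1)/d}\text{ for all finite-dimensional }W\neq0\}$. $R$ is $LD$-stable if $LD\,R=GK\,R$. *)

theory Defs
  imports Complex_Main "HOL-Library.Extended_Real" "HOL-Library.Liminf_Limsup"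
begin

definition k_algebra :: "('k::field_char_0 \<Rightarrow> 'b::ring_1 \<Rightarrow> 'b) \<Rightarrow> bool" where
  "k_algebra s \<longleftrightarrow> vector_space s \<and>
     (\<forall>a x y. s a (x * y) = s a x * y \<and> s a (x * y) = x * s a y)"

definition subalgebra :: "('k::field_char_0 \<Rightarrow> 'b::ring_1 \<Rightarrow> 'b) \<Rightarrow> 'b set \<Rightarrow> bool" where
  "subalgebra s A \<longleftrightarrow> module.subspace s A \<and> 1 \<in> A \<and> (\<forall>x\<in>A. \<forall>y\<in>A. x * y \<in> A)"

definition prod_sp :: "('k::field_char_0 \<Rightarrow> 'b::ring_1 \<Rightarrow> 'b) \<Rightarrow> 'b set \<Rightarrow> 'b set \<Rightarrow> 'b set" where
  "prod_sp s V W = module.span s {v * w | v w. v \<in> V \<and> w \<in> W}"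

fun pow_sp :: "('k::field_char_0 \<Rightarrow> 'b::ring_1 \<Rightarrow> 'b) \<Rightarrow> 'b set \<Rightarrow> nat \<Rightarrow> 'b set" where
  "pow_sp s V 0 = module.span s {1}"
| "pow_sp s V (Suc n) = prod_sp s (pow_sp s V n) V"

definition fd_sub :: "('k::field_char_0 \<Rightarrow> 'b::ring_1 \<Rightarrow> 'b) \<Rightarrow> 'b set \<Rightarrow> 'b set \<Rightarrow> bool" where
  "fd_sub s R W \<longleftrightarrow> module.subspace s W \<and> W \<subseteq> R \<and> (\<exists>F. finite F \<and> module.span s F = W)"

definition subframe :: "('k::field_char_0 \<Rightarrow> 'b::ring_1 \<Rightarrow> 'b) \<Rightarrow> 'b set \<Rightarrow> 'b set \<Rightarrow> bool" where
  "subframe s R V \<longleftrightarrow> fd_sub s R V \<and> 1 \<in> V"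

definition GK :: "('k::field_char_0 \<Rightarrow> 'b::ring_1 \<Rightarrow> 'b) \<Rightarrow> 'b set \<Rightarrow> ereal" where
  "GK s R = (SUP V \<in> {V. subframe s R V}.
     limsup (\<lambda>m::nat. ereal (ln (real (vector_space.dim s (pow_sp s V m))) / ln (real m))))"

definition LD :: "('k::field_char_0 \<Rightarrow> 'b::ring_1 \<Rightarrow> 'b) \<Rightarrow> 'b set \<Rightarrow> ereal" where
  "LD s R = (if (\<forall>V. subframe s R V \<longrightarrow>
                 (\<exists>W. fd_sub s R W \<and> W \<noteq> {0} \<and>
                      vector_space.dim s (prod_sp s V W) = vector_space.dim s W))
     then 0
     else (SUP V \<in> {V. subframe s R V}.
             Sup (ereal ` {d::real. d > 0 \<and> (\<exists>c::real. c > 0 \<and>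
                (\<forall>W. fd_sub s R W \<and> W \<noteq> {0} \<longrightarrow>
                   real (vector_space.dim s (prod_sp s V W))
                     \<ge> real (vector_space.dim s W)
                        + c * (real (vector_space.dim s W)) powr ((d - 1) / d)))})))"

definition LD_stable :: "('k::field_char_0 \<Rightarrow> 'b::ring_1 \<Rightarrow> 'b) \<Rightarrow> 'b set \<Rightarrow> bool" where
  "LD_stable s R \<longleftrightarrow> LD s R = GK s R"

definition prime_ring :: "'b::ring_1 set \<Rightarrow> bool" where
  "prime_ring R \<longleftrightarrow> (1::'b) \<noteq> 0 \<and>
     (\<forall>a\<in>R. \<forall>b\<in>R. (\<forall>r\<in>R. a * r * b = 0) \<longrightarrow> a = 0 \<or> b = 0)"

definition right_ideal :: "'b::ring_1 set \<Rightarrow> 'b set \<Rightarrow> bool" where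
  "right_ideal R I \<longleftrightarrow> I \<subseteq> R \<and> 0 \<in> I \<and> (\<forall>x\<in>I. \<forall>y\<in>I. x - y \<in> I) \<and>
     (\<forall>x\<in>I. \<forall>r\<in>R. x * r \<in> I)"

definition right_ann :: "'b::ring_1 set \<Rightarrow> 'b set \<Rightarrow> 'b set" where
  "right_ann R S = {r \<in> R. \<forall>x\<in>S. x * r = 0}"

definition ideal_sum_below :: "(nat \<Rightarrow> 'b::ring_1 set) \<Rightarrow> nat \<Rightarrow> 'b set" where
  "ideal_sum_below I n = {\<Sum>i<n. x i | x. \<forall>i<n. x i \<in> I i}"

text \<open>Right Goldie: ACC on right annihilators and no infinite direct sum of
  nonzero right ideals (finite right uniform dimension).\<close>
definition goldie_ring :: "'b::ring_1 set \<Rightarrow> bool" where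
  "goldie_ring R \<longleftrightarrow>
     \<not> (\<exists>f::nat \<Rightarrow> 'b set. \<forall>n. (\<exists>S\<subseteq>R. f n = right_ann R S) \<and> f n \<subset> f (Suc n)) \<and>
     \<not> (\<exists>I::nat \<Rightarrow> 'b set. \<forall>n. right_ideal R (I n) \<and> I n \<noteq> {0} \<and>
            I n \<inter> ideal_sum_below I n = {0})"

end

theory Submission imports Defs begin
lemma ka_vs: "k_algebra s \<Longrightarrow> vector_space s" by (simp add: k_algebra_def)

lemma mult_left_span:
  assumes ka: "k_algebra s" and x: "x \<in> module.span s X"
    and T: "module.subspace s T" and h: "\<And>y. y \<in> X \<Longrightarrow> v * y \<in> T"
  shows "v * x \<in> T"
proof -
  interpret vs: vector_space s using ka by (simp add: k_algebra_def)
  from x show ?thesis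
  proof (induct rule: vs.span_induct_alt)
    case base then show ?case using T vs.subspace_0 by simp
  next
    case (step c x y)
    have "v * (s c x + y) = s c (v * x) + v * y"
      using ka unfolding k_algebra_def by (metis distrib_left)
    then show ?case using step h T by (simp add: vs.subspace_add vs.subspace_scale)
  qed
qed

lemma mult_right_span:
  assumes ka: "k_algebra s" and x: "x \<in> module.span s X"
    and T: "module.subspace s T" and h: "\<And>y. y \<in> X \<Longrightarrow> y * v \<in> T"
  shows "x * v \<in> T"
proof -
  interpret vs: vector_space s using ka by (simp add: k_algebra_def)
  from x show ?thesis
  proof (induct rule: vs.span_induct_alt)
    case base then show ?case using T vs.subspace_0 by simp
  next
    case (step c x y)
    have "(s c x + y) * v = s c (x * v) + y * v"
      using ka unfolding k_algebra_def by (metis distrib_right)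
    then show ?case using step h T by (simp add: vs.subspace_add vs.subspace_scale)
  qed
qed

lemma prod_span_eq:
  assumes ka: "k_algebra s"
  shows "prod_sp s (module.span s P) (module.span s G) = module.span s {u * g | u g. u \<in> P \<and> g \<in> G}"
proof -
  interpret vs: vector_space s using ka by (simp add: k_algebra_def)
  let ?T = "vs.span {u * g | u g. u \<in> P \<and> g \<in> G}"
  show ?thesis unfolding prod_sp_def
  proof (rule antisym)
    show "vs.span {v * w |v w. v \<in> vs.span P \<and> w \<in> vs.span G} \<subseteq> ?T"
    proof (rule vs.span_minimal)
      show "vs.subspace ?T" by simp
      show "{v * w |v w. v \<in> vs.span P \<and> w \<in> vs.span G} \<subseteq> ?T"
      proof clarify
        fix v w assume v: "v \<in> vs.span P" and w: "w \<in> vs.span G"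
        show "v * w \<in> ?T"
        proof (rule mult_right_span[OF ka v])
          fix y assume y: "y \<in> P"
          show "y * w \<in> ?T"
            by (rule mult_left_span[OF ka w]) (auto intro!: vs.span_base y)
        qed simp
      qed
    qed
    show "?T \<subseteq> vs.span {v * w |v w. v \<in> vs.span P \<and> w \<in> vs.span G}"
      by (rule vs.span_mono) (auto intro: vs.span_base)
  qed
qed

lemma dim_le_fin:
  assumes ka: "k_algebra s" and "S \<subseteq> module.span s T" "finite F" "T \<subseteq> module.span s F"
  shows "vector_space.dim s S \<le> vector_space.dim s T"
proof -
  interpret vs: vector_space s using ka by (simp add: k_algebra_def)
  obtain B where B: "B \<subseteq> T" "vs.independent B" "T \<subseteq> vs.span B" "card B = vs.dim T"
    using vs.basis_exists by blast
  have "finite B" using vs.independent_span_bound[OF assms(3) B(2)] B(1) assms(4) by auto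
  have "S \<subseteq> vs.span B" using assms(2) B(3) by (meson order_trans vs.span_minimal vs.subspace_span)
  then have "vs.dim S \<le> card B" using vs.dim_le_card \<open>finite B\<close> by blast
  then show ?thesis using B by simp
qed

lemma dim_ge1:
  assumes ka: "k_algebra s" and "x \<in> T" "x \<noteq> 0" "finite F" "T \<subseteq> module.span s F"
  shows "vector_space.dim s T \<ge> 1"
proof -
  interpret vs: vector_space s using ka by (simp add: k_algebra_def)
  have "vs.independent {x}" using assms(3) by (simp add: vs.independent_insert)
  then have "vs.dim {x} = 1" using vs.dim_eq_card_independent by simp
  moreover have "vs.dim {x} \<le> vs.dim T"
    using dim_le_fin[OF ka _ assms(4,5)] assms(2) by (simp add: vs.span_base)
  ultimately show ?thesis by simp
qed

lemma pow_facts: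
  assumes ka: "k_algebra s" and sa: "subalgebra s A" and VA: "V \<subseteq> A"
    and G: "finite G" "module.span s G = V" and one: "1 \<in> V"
  shows "pow_sp s V n \<subseteq> A \<and> (\<exists>F. finite F \<and> module.span s F = pow_sp s V n) \<and>
         1 \<in> pow_sp s V n \<and> (\<forall>v\<in>V. \<forall>w\<in>pow_sp s V n. v * w \<in> pow_sp s V (Suc n))"
proof (induct n)
  interpret vs: vector_space s using ka by (simp add: k_algebra_def)
  have Asub: "vs.subspace A" "1 \<in> A" "\<And>x y. x \<in> A \<Longrightarrow> y \<in> A \<Longrightarrow> x * y \<in> A"
    using sa by (auto simp: subalgebra_def)
  case 0
  have v1: "v \<in> pow_sp s V (Suc 0)" if "v \<in> V" for v
  proof -
    have "1 * v \<in> {a * b |a b. a \<in> vs.span {1} \<and> b \<in> V}" using that vs.span_base by blast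
    then have "1 * v \<in> pow_sp s V (Suc 0)" unfolding pow_sp.simps prod_sp_def by (rule vs.span_base)
    then show ?thesis by (simp only: mult_1_left)
  qed
  have "v * w \<in> pow_sp s V (Suc 0)" if "v \<in> V" "w \<in> vs.span {1}" for v w
  proof (rule mult_left_span[OF ka that(2)])
    show "vs.subspace (pow_sp s V (Suc 0))" by (simp add: prod_sp_def)
  qed (use v1 that(1) in auto)
  note c4 = this
  have c1: "vs.span {1} \<subseteq> A" using Asub by (intro vs.span_minimal) auto
  have c2: "\<exists>F. finite F \<and> vs.span F = pow_sp s V 0" by (intro exI[of _ "{1}"]) simp
  have c3: "1 \<in> pow_sp s V 0" by (simp add: vs.span_base)
  show ?case using c1 c2 c3 c4 by simp
next
  interpret vs: vector_space s using ka by (simp add: k_algebra_def)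
  have Asub: "vs.subspace A" "1 \<in> A" "\<And>x y. x \<in> A \<Longrightarrow> y \<in> A \<Longrightarrow> x * y \<in> A"
    using sa by (auto simp: subalgebra_def)
  case (Suc n)
  then obtain F where F: "finite F" "vs.span F = pow_sp s V n" by blast
  have 1: "pow_sp s V (Suc n) \<subseteq> A"
    unfolding pow_sp.simps prod_sp_def
    by (rule vs.span_minimal) (use Suc VA Asub in auto)
  have "pow_sp s V (Suc n) = vs.span {u * g |u g. u \<in> F \<and> g \<in> G}"
    using prod_span_eq[OF ka, of F G] F G by simp
  moreover have "finite {u * g |u g. u \<in> F \<and> g \<in> G}"
  proof -
    have "{u * g |u g. u \<in> F \<and> g \<in> G} = (\<lambda>(u,g). u * g) ` (F \<times> G)" by auto
    then show ?thesis using F G by simp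
  qed
  ultimately have 2: "\<exists>F. finite F \<and> vs.span F = pow_sp s V (Suc n)"
    by (intro exI[of _ "{u * g |u g. u \<in> F \<and> g \<in> G}"]) simp
  have 3: "1 \<in> pow_sp s V (Suc n)"
  proof -
    have "1 * 1 \<in> {a * b |a b. a \<in> pow_sp s V n \<and> b \<in> V}" using Suc one by blast
    then have "1 * 1 \<in> pow_sp s V (Suc n)" unfolding pow_sp.simps prod_sp_def by (rule vs.span_base)
    then show ?thesis by (simp only: mult_1_left)
  qed
  have 4: "v * w \<in> pow_sp s V (Suc (Suc n))" if "v \<in> V" "w \<in> pow_sp s V (Suc n)" for v w
  proof (rule mult_left_span[OF ka])
    show "w \<in> vs.span {a * b |a b. a \<in> pow_sp s V n \<and> b \<in> V}"
      using that(2) by (simp add: prod_sp_def)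
    show "vs.subspace (pow_sp s V (Suc (Suc n)))" by (simp add: prod_sp_def)
    fix y assume "y \<in> {a * b |a b. a \<in> pow_sp s V n \<and> b \<in> V}"
    then obtain a b where y: "y = a * b" "a \<in> pow_sp s V n" "b \<in> V" by blast
    have "v * a \<in> pow_sp s V (Suc n)" using Suc that y by blast
    then have "(v * a) * b \<in> {a * b |a b. a \<in> pow_sp s V (Suc n) \<and> b \<in> V}" using y by blast
    then have "(v * a) * b \<in> pow_sp s V (Suc (Suc n))"
      unfolding pow_sp.simps(2)[of s V "Suc n"] prod_sp_def by (rule vs.span_base)
    then show "v * y \<in> pow_sp s V (Suc (Suc n))"
      using y(1) by (simp only: mult.assoc)
  qed
  show ?case using 1 2 3 4 by simp
qed

lemma mvt_pow:
  fixes x d :: real assumes "x > 0" "d \<ge> 1"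
  shows "(x+1) powr d - x powr d \<le> d * (x+1) powr (d-1)"
proof -
  have der: "((\<lambda>t. t powr d) has_real_derivative d * t powr (d-1)) (at t)" if "x \<le> t" for t
  proof (rule has_real_derivative_powr)
    show "0 < t" using that assms(1) by linarith
  qed
  obtain z where z: "x < z" "z < x+1" "(x+1) powr d - x powr d = ((x+1) - x) * (d * z powr (d-1))"
    using MVT2[of x "x+1" "\<lambda>t. t powr d" "\<lambda>t. d * t powr (d-1)", OF _ der] by auto
  have "z powr (d-1) \<le> (x+1) powr (d-1)" using z assms by (intro powr_mono2) auto
  then have "d * z powr (d-1) \<le> d * (x+1) powr (d-1)" using assms by (intro mult_left_mono) auto
  moreover have "(x+1) powr d - x powr d = d * z powr (d-1)" using z(3) by simp
  ultimately show ?thesis by linarith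
qed

lemma step_ineq:
  fixes n d lam c :: real assumes n: "n \<ge> 1" and d: "d \<ge> 1" and lam: "lam > 0"
    and lc: "lam * d * 2 powr (d-1) \<le> c"
  shows "(lam*(n+1)) powr d \<le> (lam*n) powr d + c * (lam*n) powr (d-1)"
proof -
  have e1: "(lam*(n+1)) powr d = lam powr d * (n+1) powr d" using lam n by (simp add: powr_mult)
  have e2: "(lam*n) powr d = lam powr d * n powr d" using lam n by (simp add: powr_mult)
  have e3: "(lam*n) powr (d-1) = lam powr (d-1) * n powr (d-1)" using lam n by (simp add: powr_mult)
  have "lam powr d = lam powr (1 + (d-1))" by simp
  also have "\<dots> = lam powr 1 * lam powr (d-1)" by (rule powr_add)
  also have "\<dots> = lam * lam powr (d-1)" using lam by simp
  finally have e4: "lam powr d = lam * lam powr (d-1)" .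
  have m: "(n+1) powr d - n powr d \<le> d * (n+1) powr (d-1)" using mvt_pow n d by simp
  have "(n+1) powr (d-1) \<le> (2*n) powr (d-1)" using n d by (intro powr_mono2) auto
  also have "\<dots> = 2 powr (d-1) * n powr (d-1)" using n by (simp add: powr_mult)
  finally have "d * (n+1) powr (d-1) \<le> d * (2 powr (d-1) * n powr (d-1))"
    using d by (intro mult_left_mono) auto
  then have m2: "(n+1) powr d - n powr d \<le> d * 2 powr (d-1) * n powr (d-1)"
    using m by (simp add: mult.assoc)
  have pos: "lam powr (d-1) * n powr (d-1) \<ge> 0" by simp
  have "lam powr d * ((n+1) powr d - n powr d) \<le> lam powr d * (d * 2 powr (d-1) * n powr (d-1))"
    using m2 by (intro mult_left_mono) auto
  also have "\<dots> = (lam * d * 2 powr (d-1)) * (lam powr (d-1) * n powr (d-1))"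
    unfolding e4 by (simp only: mult.assoc mult.left_commute)
  also have "\<dots> \<le> c * (lam powr (d-1) * n powr (d-1))"
    using lc pos by (intro mult_right_mono) auto
  finally have X: "lam powr d * ((n+1) powr d - n powr d) \<le> c * (lam powr (d-1) * n powr (d-1))" .
  have "lam powr d * ((n+1) powr d - n powr d) = lam powr d * (n+1) powr d - lam powr d * n powr d"
    by (simp only: right_diff_distrib)
  then show ?thesis unfolding e1 e2 e3 using X by linarith
qed


lemma growth_limsup:
  fixes a :: "nat \<Rightarrow> nat" and c d :: real
  assumes c: "c > 0" and d: "d > 0" and a1: "\<And>n. a n \<ge> 1"
    and rec: "\<And>n. real (a (Suc n)) \<ge> real (a n) + c * real (a n) powr ((d-1)/d)"
  shows "ereal d \<le> limsup (\<lambda>m. ereal (ln (real (a m)) / ln (real m)))"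
proof -
  have inc: "a (Suc n) > a n" for n
  proof -
    have "c * real (a n) powr ((d-1)/d) > 0" using c a1[of n] by simp
    then show ?thesis using rec[of n] by linarith
  qed
  have an: "a n \<ge> n + 1" for n
  proof (induct n)
    case 0 then show ?case using a1[of 0] by simp
  next
    case (Suc n) then show ?case using inc[of n] by simp
  qed
  show ?thesis
  proof (cases "d \<le> 1")
    case True
    have "eventually (\<lambda>m. ereal d \<le> ereal (ln (real (a m)) / ln (real m))) sequentially"
      using eventually_ge_at_top[of 2]
    proof eventually_elim
      case (elim m)
      have lm: "ln (real m) > 0" using elim by simp
      have "ln (real m) \<le> ln (real (a m))" using an[of m] elim by simp
      then have "1 \<le> ln (real (a m)) / ln (real m)" using lm by simp
      then show ?case using True by simp
    qed
    then show ?thesis by (intro le_Limsup) auto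
  next
    case False
    define q where "q = c / (d * 2 powr (d-1))"
    define lam where "lam = min 1 q"
    have qpos: "q > 0" using c d by (simp add: q_def)
    have lampos: "lam > 0" using qpos by (simp add: lam_def)
    have lc: "lam * d * 2 powr (d-1) \<le> c"
    proof -
      have "lam * (d * 2 powr (d-1)) \<le> q * (d * 2 powr (d-1))"
        using d by (intro mult_right_mono) (auto simp: lam_def)
      also have "\<dots> = c" using d by (simp add: q_def)
      finally show ?thesis by (simp add: mult.assoc)
    qed
    have lb: "real (a n) \<ge> (lam * real n) powr d" if "n \<ge> 1" for n
      using that
    proof (induct n rule: dec_induct)
      case base
      have "(lam * real 1) powr d \<le> 1 powr d" using lampos d by (intro powr_mono2) (auto simp: lam_def)
      then show ?case using a1[of 1] by simp
    next
      case (step n)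
      let ?x = "real (a n)" and ?y = "(lam * real n) powr d"
      have ypos: "?y > 0" using lampos step by simp
      have p: "(d-1)/d \<ge> 0" using False d by simp
      have yx: "?y \<le> ?x" using step by simp
      have A: "?y powr ((d-1)/d) \<le> ?x powr ((d-1)/d)"
        using yx ypos p by (intro powr_mono2) auto
      have B: "?y powr ((d-1)/d) = (lam * real n) powr (d-1)"
        using d by (simp add: powr_powr)
      have "c * (lam * real n) powr (d-1) \<le> c * ?x powr ((d-1)/d)"
        using A B c by (intro mult_left_mono) auto
      then have "?y + c * (lam * real n) powr (d-1) \<le> ?x + c * ?x powr ((d-1)/d)"
        using yx by (rule add_mono[rotated])
      moreover have "(lam * (real n + 1)) powr d \<le> ?y + c * (lam * real n) powr (d-1)"
        using step_ineq[of "real n" d lam c] step False lampos lc by simp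
      ultimately have "(lam * (real n + 1)) powr d \<le> real (a (Suc n))" using rec[of n] by linarith
      then show ?case by (simp add: add.commute)
    qed
    have ev: "eventually (\<lambda>m. ereal (d + d * ln lam / ln (real m)) \<le> ereal (ln (real (a m)) / ln (real m))) sequentially"
      using eventually_ge_at_top[of 2]
    proof eventually_elim
      case (elim m)
      have lm: "ln (real m) > 0" using elim by simp
      have lp: "(lam * real m) powr d > 0" using lampos elim by simp
      have am: "real (a m) > 0" using a1[of m] by simp
      have "ln ((lam * real m) powr d) \<le> ln (real (a m))"
        using lb[of m] elim iffD2[OF ln_le_cancel_iff[OF lp am]] by simp
      moreover have "ln ((lam * real m) powr d) = d * ln (lam * real m)"
        using lampos elim by (subst ln_powr) auto
      moreover have "ln (lam * real m) = ln lam + ln (real m)"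
        using lampos elim by (subst ln_mult) auto
      ultimately have "d * ln lam + d * ln (real m) \<le> ln (real (a m))" by (simp add: distrib_left)
      then have "(d * ln lam + d * ln (real m)) / ln (real m) \<le> ln (real (a m)) / ln (real m)"
        using lm by (intro divide_right_mono) auto
      moreover have "(d * ln lam + d * ln (real m)) / ln (real m) = d + d * ln lam / ln (real m)"
        using lm by (simp add: add_divide_distrib)
      ultimately show ?case by simp
    qed
    have "((\<lambda>m::nat. d + d * ln lam / ln (real m)) \<longlongrightarrow> d) sequentially"
    proof -
      have "filterlim (\<lambda>m::nat. ln (real m)) at_top sequentially"
        by (rule filterlim_compose[OF ln_at_top filterlim_real_sequentially])
      then have "((\<lambda>m::nat. d * ln lam / ln (real m)) \<longlongrightarrow> 0) sequentially"
        by (intro tendsto_divide_0[OF tendsto_const] filterlim_at_top_imp_at_infinity)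
      from tendsto_add[OF tendsto_const[of d] this] show ?thesis by simp
    qed
    then have "((\<lambda>m::nat. ereal (d + d * ln lam / ln (real m))) \<longlongrightarrow> ereal d) sequentially"
      by (rule tendsto_ereal)
    then have "limsup (\<lambda>m::nat. ereal (d + d * ln lam / ln (real m))) = ereal d"
      by (intro lim_imp_Limsup) auto
    moreover have "limsup (\<lambda>m::nat. ereal (d + d * ln lam / ln (real m))) \<le> limsup (\<lambda>m. ereal (ln (real (a m)) / ln (real m)))"
      using ev by (rule Limsup_mono)
    ultimately show ?thesis by metis
  qed
qed

lemma subframe_facts:
  assumes "subframe s A V"
  obtains G where "finite G" "module.span s G = V" "V \<subseteq> A" "1 \<in> V"
  using assms unfolding subframe_def fd_sub_def by blast

lemma LD_le_GK:
  assumes ka: "k_algebra s" and sa: "subalgebra s A" and one0: "(1::'b::ring_1) \<noteq> 0"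
  shows "LD s A \<le> GK s (A :: 'b set)"
proof -
  interpret vs: vector_space s using ka by (simp add: k_algebra_def)
  have dimpos: "vs.dim (pow_sp s V n) \<ge> 1 \<and> fd_sub s A (pow_sp s V n) \<and> pow_sp s V n \<noteq> {0}"
    if V: "subframe s A V" for V n
  proof -
    obtain G where G: "finite G" "vs.span G = V" "V \<subseteq> A" "1 \<in> V"
      using subframe_facts[OF V] by blast
    note pf = pow_facts[OF ka sa G(3) G(1) G(2) G(4), of n]
    then obtain F where F: "finite F" "vs.span F = pow_sp s V n" by blast
    have "vs.dim (pow_sp s V n) \<ge> 1"
      using dim_ge1[OF ka _ one0 F(1)] pf F by (simp add: vs.span_superset)
    moreover have "fd_sub s A (pow_sp s V n)" unfolding fd_sub_def
      using pf F by (metis vs.subspace_span)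
    moreover have "pow_sp s V n \<noteq> {0}" using pf one0 by auto
    ultimately show ?thesis by blast
  qed
  show ?thesis
  proof (cases "\<forall>V. subframe s A V \<longrightarrow>
                 (\<exists>W. fd_sub s A W \<and> W \<noteq> {0} \<and>
                      vector_space.dim s (prod_sp s V W) = vector_space.dim s W)")
    case True
    then have "LD s A = 0" unfolding LD_def by simp
    moreover have "0 \<le> GK s A"
    proof -
      let ?V = "vs.span {1}"
      have "?V \<subseteq> A" using sa by (intro vs.span_minimal) (auto simp: subalgebra_def)
      then have sf: "subframe s A ?V" unfolding subframe_def fd_sub_def
        by (auto intro!: vs.span_base)
      have "0 \<le> limsup (\<lambda>m::nat. ereal (ln (real (vs.dim (pow_sp s ?V m))) / ln (real m)))"
      proof (intro le_Limsup)
        show "eventually (\<lambda>m::nat. 0 \<le> ereal (ln (real (vs.dim (pow_sp s ?V m))) / ln (real m))) sequentially"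
          using eventually_ge_at_top[of 1]
        proof eventually_elim
          case (elim m)
          have "vs.dim (pow_sp s ?V m) \<ge> 1" using dimpos[OF sf] by blast
          then have "ln (real (vs.dim (pow_sp s ?V m))) \<ge> 0" by simp
          moreover have "ln (real m) \<ge> 0" using elim by simp
          ultimately show ?case by simp
        qed
      qed simp
      then show ?thesis unfolding GK_def using sf
        by (meson SUP_upper2 mem_Collect_eq)
    qed
    ultimately show ?thesis by simp
  next
    case False
    then have "LD s A = (SUP V \<in> {V. subframe s A V}.
             Sup (ereal ` {d::real. d > 0 \<and> (\<exists>c::real. c > 0 \<and>
                (\<forall>W. fd_sub s A W \<and> W \<noteq> {0} \<longrightarrow>
                   real (vector_space.dim s (prod_sp s V W))
                     \<ge> real (vector_space.dim s W)
                        + c * (real (vector_space.dim s W)) powr ((d - 1) / d)))}))"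
      unfolding LD_def using False by (simp only: if_False not_False_eq_True eq_False[THEN iffD2, OF False])
    also have "\<dots> \<le> GK s A" unfolding GK_def
    proof (rule SUP_mono)
      fix V assume "V \<in> {V. subframe s A V}"
      then have V: "subframe s A V" by simp
      obtain G where G: "finite G" "vs.span G = V" "V \<subseteq> A" "1 \<in> V"
        using subframe_facts[OF V] by blast
      have "Sup (ereal ` {d::real. d > 0 \<and> (\<exists>c::real. c > 0 \<and>
                (\<forall>W. fd_sub s A W \<and> W \<noteq> {0} \<longrightarrow>
                   real (vector_space.dim s (prod_sp s V W))
                     \<ge> real (vector_space.dim s W)
                        + c * (real (vector_space.dim s W)) powr ((d - 1) / d)))})
            \<le> limsup (\<lambda>m::nat. ereal (ln (real (vs.dim (pow_sp s V m))) / ln (real m)))"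
      proof (rule Sup_least, clarify)
        fix d c :: real
        assume d: "d > 0" and c: "c > 0" and H: "\<forall>W. fd_sub s A W \<and> W \<noteq> {0} \<longrightarrow>
                   real (vector_space.dim s (prod_sp s V W))
                     \<ge> real (vector_space.dim s W)
                        + c * (real (vector_space.dim s W)) powr ((d - 1) / d)"
        show "ereal d \<le> limsup (\<lambda>m::nat. ereal (ln (real (vs.dim (pow_sp s V m))) / ln (real m)))"
        proof (rule growth_limsup[OF c d])
          fix n
          show "1 \<le> vs.dim (pow_sp s V n)" using dimpos[OF V] by blast
          have h: "real (vs.dim (prod_sp s V (pow_sp s V n)))
                  \<ge> real (vs.dim (pow_sp s V n)) + c * real (vs.dim (pow_sp s V n)) powr ((d - 1) / d)"
            using H dimpos[OF V, of n] by blast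
          note pf = pow_facts[OF ka sa G(3) G(1) G(2) G(4), of "Suc n"]
          note pf0 = pow_facts[OF ka sa G(3) G(1) G(2) G(4), of n]
          then obtain F where F: "finite F" "vs.span F = pow_sp s V (Suc n)" 
            using pf by blast
          have sub: "prod_sp s V (pow_sp s V n) \<subseteq> pow_sp s V (Suc n)"
            unfolding prod_sp_def
          proof (rule vs.span_minimal)
            show "vs.subspace (pow_sp s V (Suc n))" by (simp add: prod_sp_def)
          qed (use pf0 in blast)
          have "vs.dim (prod_sp s V (pow_sp s V n)) \<le> vs.dim (pow_sp s V (Suc n))"
            by (rule dim_le_fin[OF ka _ F(1)]) (use sub F in \<open>auto intro: vs.span_base\<close>)
          then show "real (vs.dim (pow_sp s V n)) + c * real (vs.dim (pow_sp s V n)) powr ((d - 1) / d)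
                \<le> real (vs.dim (pow_sp s V (Suc n)))" using h by linarith
        qed
      qed
      then show "\<exists>V'\<in>{V. subframe s A V}. Sup (ereal ` {d::real. d > 0 \<and> (\<exists>c::real. c > 0 \<and>
                (\<forall>W. fd_sub s A W \<and> W \<noteq> {0} \<longrightarrow>
                   real (vector_space.dim s (prod_sp s V W))
                     \<ge> real (vector_space.dim s W)
                        + c * (real (vector_space.dim s W)) powr ((d - 1) / d)))})
            \<le> limsup (\<lambda>m::nat. ereal (ln (real (vs.dim (pow_sp s V' m))) / ln (real m)))"
        using V by blast
    qed
    finally show ?thesis .
  qed
qed

lemma GK_mono_UNIV: "GK s A \<le> GK s UNIV"
  unfolding GK_def
  by (rule SUP_subset_mono) (auto simp: subframe_def fd_sub_def)

theorem lemma3p2: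
  fixes scale :: "'k::field_char_0 \<Rightarrow> 'b::ring_1 \<Rightarrow> 'b" and A :: "'b set"
  assumes "k_algebra scale"
    and "subalgebra scale A"
    and "prime_ring A" and "goldie_ring A"
    and "prime_ring (UNIV :: 'b set)" and "goldie_ring (UNIV :: 'b set)"
    and "LD scale A = LD scale UNIV"
    and "LD_stable scale UNIV"
  shows "LD_stable scale A"
proof -
  have one0: "(1::'b) \<noteq> 0" using assms(3) by (simp add: prime_ring_def)
  have "LD scale A \<le> GK scale A" by (rule LD_le_GK[OF assms(1,2) one0])
  moreover have "GK scale A \<le> GK scale UNIV" by (rule GK_mono_UNIV)
  moreover have "GK scale UNIV = LD scale A" using assms(7,8) by (simp add: LD_stable_def)
  ultimately show ?thesis unfolding LD_stable_def by (metis order_antisym order_trans)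
qed

end
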